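(* Let $X=(X_1,\dots,X_d)$ be a random vector of asset returns with finite, strictly positive variances and correlation matrix $\boldsymbol{\rho}=(\rho_{ij})$. Let $G^{\star}=\{G_1,\dots,G_K\}$ be the partition of $[d]$ into the equivalence classes of the relation $i\sim j \iff \max_{l\neq i,j}|\rho_{il}-\rho_{jl}|=0$. For a selection $J=(J(1),\dots,J(K))$ with $J(k)\in G_k$ for each $k$, let $\boldsymbol{\Sigma}_{J}$ be the $K\times K$ covariance matrix of $(X_{J(1)},\dots,X_{J(K)})$ and define the minimum (no-short-selling) portfolio variance $$\mathrm{Var}_{\min}(P_J):=\min\{\mathbf{w}^{\top}\boldsymbol{\Sigma}_J\mathbf{w}:\ \mathbf{w}\in\mathbb{R}^K,\ \mathbf{w}^{\top}\mathbf{1}=1,\ \mathbf{w}\ge 0\}.$$ Let $J^{*}$ be any selection with $J^{*}(k)\in\operatorname{argmin}_{j\in G_k}\mathrm{Var}(X_j)$ for every $k\in[K]$. Then $\mathrm{Var}_{\min}(P_{J^{*}})\le \mathrm{Var}_{\min}(P_J)$ for every selection $J$, i.e. $J^*$ minimizes $\mathrm{Var}_{\min}(P_J)$ over all selections.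
   Context: $[d]=\{1,\dots,d\}$; $\mathbf{1}$ is the all-ones vector and $\mathbf{w}\ge0$ is componentwise. *)

theory Defs
  imports "HOL-Probability.Probability"
begin

definition covar :: "'a measure \<Rightarrow> ('a \<Rightarrow> real) \<Rightarrow> ('a \<Rightarrow> real) \<Rightarrow> real" where
  "covar M Y Z = (LINT \<omega>|M. (Y \<omega> - (LINT \<omega>'|M. Y \<omega>')) * (Z \<omega> - (LINT \<omega>'|M. Z \<omega>')))"

definition corr :: "'a measure \<Rightarrow> ('i \<Rightarrow> 'a \<Rightarrow> real) \<Rightarrow> 'i \<Rightarrow> 'i \<Rightarrow> real" where
  "corr M X i j = covar M (X i) (X j) / sqrt (covar M (X i) (X i) * covar M (X j) (X j))"

text \<open>i ~ j iff max over l different from i,j of |rho_il - rho_jl| is 0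
  (maximum over the empty set read as 0).\<close>
definition corr_equiv :: "'a measure \<Rightarrow> ('i \<Rightarrow> 'a \<Rightarrow> real) \<Rightarrow> 'i \<Rightarrow> 'i \<Rightarrow> bool" where
  "corr_equiv M X i j \<longleftrightarrow> (\<forall>l. l \<noteq> i \<and> l \<noteq> j \<longrightarrow> \<bar>corr M X i l - corr M X j l\<bar> = 0)"

definition classes :: "'a measure \<Rightarrow> ('i \<Rightarrow> 'a \<Rightarrow> real) \<Rightarrow> 'i set set" where
  "classes M X = UNIV // {(i, j). corr_equiv M X i j}"

definition is_selection :: "'a measure \<Rightarrow> ('i \<Rightarrow> 'a \<Rightarrow> real) \<Rightarrow> ('i set \<Rightarrow> 'i) \<Rightarrow> bool" where
  "is_selection M X J \<longleftrightarrow> (\<forall>G \<in> classes M X. J G \<in> G)"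

definition port_var :: "'a measure \<Rightarrow> ('i \<Rightarrow> 'a \<Rightarrow> real) \<Rightarrow> ('i set \<Rightarrow> 'i) \<Rightarrow> ('i set \<Rightarrow> real) \<Rightarrow> real" where
  "port_var M X J w = (\<Sum>G\<in>classes M X. \<Sum>H\<in>classes M X. w G * w H * covar M (X (J G)) (X (J H)))"

text \<open>Minimum long-only fully invested portfolio variance (the minimum is attained, so Inf = min).\<close>
definition var_min :: "'a measure \<Rightarrow> ('i \<Rightarrow> 'a \<Rightarrow> real) \<Rightarrow> ('i set \<Rightarrow> 'i) \<Rightarrow> real" where
  "var_min M X J = Inf {port_var M X J w | w. (\<forall>G \<in> classes M X. w G \<ge> 0) \<and> (\<Sum>G\<in>classes M X. w G) = 1}"

end

theory Submission
  imports Defs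
begin

lemma int_prod:
  assumes P: "prob_space M"
    and meas: "\<And>i. X i \<in> borel_measurable M"
    and sq: "\<And>i. integrable M (\<lambda>\<omega>. (X i \<omega>)\<^sup>2)"
  shows "integrable M (\<lambda>\<omega>. (X a \<omega> - c) * (X b \<omega> - (d::real)))"
proof -
  interpret prob_space M by (rule P)
  have ia: "integrable M (X i)" for i
    by (rule square_integrable_imp_integrable[OF meas sq])
  have ab: "integrable M (\<lambda>\<omega>. X a \<omega> * X b \<omega>)"
  proof (rule Bochner_Integration.integrable_bound[where f="\<lambda>\<omega>. (X a \<omega>)\<^sup>2 + (X b \<omega>)\<^sup>2"])
    show "integrable M (\<lambda>\<omega>. (X a \<omega>)\<^sup>2 + (X b \<omega>)\<^sup>2)" using sq by auto
    show "(\<lambda>\<omega>. X a \<omega> * X b \<omega>) \<in> borel_measurable M" using meas by auto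
    show "AE x in M. norm (X a x * X b x) \<le> norm ((X a x)\<^sup>2 + (X b x)\<^sup>2)"
    proof (rule AE_I2)
      fix x
      have "\<bar>X a x * X b x\<bar> \<le> (X a x)\<^sup>2 + (X b x)\<^sup>2"
      proof -
        have h1: "0 \<le> (X a x - X b x)\<^sup>2" "0 \<le> (X a x + X b x)\<^sup>2" by auto
        then show ?thesis unfolding power2_eq_square by (auto simp: algebra_simps abs_if)
      qed
      then show "norm (X a x * X b x) \<le> norm ((X a x)\<^sup>2 + (X b x)\<^sup>2)" by simp
    qed
  qed
  have e: "(\<lambda>\<omega>. (X a \<omega> - c) * (X b \<omega> - d)) = (\<lambda>\<omega>. X a \<omega> * X b \<omega> - d * X a \<omega> - c * X b \<omega> + c * d)"
    by (auto simp: algebra_simps)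
  show ?thesis unfolding e using ab ia by auto
qed


lemma covar_sym: "covar M Y Z = covar M Z Y"
  unfolding covar_def by (simp add: mult.commute)

lemma corr_sym: "corr M X i j = corr M X j i"
  unfolding corr_def by (simp add: covar_sym mult.commute)

lemma equiv_corr: "equiv UNIV {(i, j). corr_equiv M X i j}"
proof -
  have tr: "corr_equiv M X i k" if ij: "corr_equiv M X i j" and jk: "corr_equiv M X j k" for i j k
  proof (cases "i = j \<or> j = k \<or> i = k")
    case True
    then show ?thesis using ij jk unfolding corr_equiv_def by auto
  next
    case False
    have a: "corr M X i l = corr M X j l" if "l \<noteq> i" "l \<noteq> j" for l
      using ij that unfolding corr_equiv_def by auto
    have b: "corr M X j l = corr M X k l" if "l \<noteq> j" "l \<noteq> k" for l
      using jk that unfolding corr_equiv_def by auto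
    have "corr M X i l = corr M X k l" if "l \<noteq> i" "l \<noteq> k" for l
    proof (cases "l = j")
      case True
      have "corr M X i j = corr M X j i" by (rule corr_sym)
      also have "\<dots> = corr M X k i" using b False by auto
      also have "\<dots> = corr M X i k" by (rule corr_sym)
      also have "\<dots> = corr M X j k" using a False by auto
      also have "\<dots> = corr M X k j" by (rule corr_sym)
      finally show ?thesis using True by simp
    next
      case False
      then show ?thesis using a b that by auto
    qed
    then show ?thesis unfolding corr_equiv_def by auto
  qed
  show ?thesis unfolding equiv_def
    by (auto intro!: refl_onI symI transI simp: corr_equiv_def corr_sym intro: tr)
qed

lemma corr_class:
  assumes "G \<in> classes M X" "i \<in> G" "j \<in> G" "l \<notin> G"
  shows "corr M X i l = corr M X j l"
proof -
  have "(i, j) \<in> {(i, j). corr_equiv M X i j}"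
    using assms equiv_corr[of M X] unfolding classes_def
    by (meson quotient_eq_iff)
  then show ?thesis using assms unfolding corr_equiv_def by auto
qed

lemma port_var_nonneg:
  assumes P: "prob_space M"
    and meas: "\<And>i. X i \<in> borel_measurable M"
    and sq: "\<And>i. integrable M (\<lambda>\<omega>. (X i \<omega>)\<^sup>2)"
  shows "port_var M X J w \<ge> 0"
proof -
  define E where "E i = (LINT \<omega>|M. X i \<omega>)" for i
  define Y where "Y i \<omega> = X i \<omega> - E i" for i \<omega>
  define C where "C = classes M X"
  have iY: "integrable M (\<lambda>\<omega>. Y a \<omega> * Y b \<omega>)" for a b
    unfolding Y_def by (rule int_prod[OF P meas sq])
  have cv: "covar M (X a) (X b) = (LINT \<omega>|M. Y a \<omega> * Y b \<omega>)" for a b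
    unfolding covar_def Y_def E_def by simp
  have "port_var M X J w = (\<Sum>G\<in>C. \<Sum>H\<in>C. LINT \<omega>|M. w G * w H * (Y (J G) \<omega> * Y (J H) \<omega>))"
    unfolding port_var_def C_def cv by simp
  also have "\<dots> = (LINT \<omega>|M. (\<Sum>G\<in>C. \<Sum>H\<in>C. w G * w H * (Y (J G) \<omega> * Y (J H) \<omega>)))"
    using iY by (simp add: integral_sum)
  also have "\<dots> = (LINT \<omega>|M. (\<Sum>G\<in>C. w G * Y (J G) \<omega>)\<^sup>2)"
    by (simp add: power2_eq_square sum_product algebra_simps)
  also have "\<dots> \<ge> 0" by simp
  finally show ?thesis .
qed

lemma covar_corr:
  assumes "covar M (X a) (X a) > 0" "covar M (X b) (X b) > 0"
  shows "covar M (X a) (X b) = corr M X a b * (sqrt (covar M (X a) (X a)) * sqrt (covar M (X b) (X b)))"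
  using assms unfolding corr_def by (simp add: real_sqrt_mult)

theorem theorem2:
  fixes M :: "'a measure" and X :: "'i::finite \<Rightarrow> 'a \<Rightarrow> real"
    and Jstar J :: "'i set \<Rightarrow> 'i"
  assumes "prob_space M"
    and "\<And>i. X i \<in> borel_measurable M"
    and "\<And>i. integrable M (\<lambda>\<omega>. (X i \<omega>)\<^sup>2)"
    and "\<And>i. covar M (X i) (X i) > 0"
    and "is_selection M X Jstar"
    and "\<And>G j. G \<in> classes M X \<Longrightarrow> j \<in> G \<Longrightarrow>
            covar M (X (Jstar G)) (X (Jstar G)) \<le> covar M (X j) (X j)"
    and "is_selection M X J"
  shows "var_min M X Jstar \<le> var_min M X J"
proof -
  note P = assms(1) and meas = assms(2) and sq = assms(3) and pos = assms(4)
  define C where "C = classes M X"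
  define s where "s i = sqrt (covar M (X i) (X i))" for i
  define feas where "feas = {w. (\<forall>G \<in> C. w G \<ge> (0::real)) \<and> (\<Sum>G\<in>C. w G) = 1}"
  have spos: "s i > 0" for i using pos unfolding s_def by simp
  have finC: "finite C" unfolding C_def classes_def
    by (rule finite_subset[of _ "Pow UNIV"]) (auto simp: quotient_def)
  have Cne: "C \<noteq> {}" unfolding C_def classes_def by (simp add: quotient_def)
  have vm: "var_min M X K = Inf ((\<lambda>w. port_var M X K w) ` feas)" for K
    unfolding var_min_def feas_def C_def by (simp add: image_def, metis)
  have Jin: "J G \<in> G" "Jstar G \<in> G" if "G \<in> C" for G
    using assms(5,7) that unfolding is_selection_def C_def by auto
  have sle: "s (Jstar G) \<le> s (J G)" if "G \<in> C" for G
    using assms(6)[of G "J G"] Jin that unfolding s_def C_def by simp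
  define \<rho> where "\<rho> G H = corr M X (J G) (J H)" for G H
  have rho: "corr M X (Jstar G) (Jstar H) = \<rho> G H" if "G \<in> C" "H \<in> C" for G H
  proof (cases "G = H")
    case True
    have "corr M X i i = 1" for i using pos[of i] unfolding corr_def by simp
    then show ?thesis unfolding \<rho>_def using True by simp
  next
    case False
    have dj: "G \<inter> H = {}"
      using quotient_disj[OF equiv_corr[of M X]] that False unfolding C_def classes_def by blast
    have "corr M X (J G) (J H) = corr M X (Jstar G) (J H)"
      using corr_class[of G M X "J G" "Jstar G" "J H"] Jin that dj unfolding C_def by blast
    also have "\<dots> = corr M X (J H) (Jstar G)" by (rule corr_sym)
    also have "\<dots> = corr M X (Jstar H) (Jstar G)"
      using corr_class[of H M X "J H" "Jstar H" "Jstar G"] Jin that dj unfolding C_def by blast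
    also have "\<dots> = corr M X (Jstar G) (Jstar H)" by (rule corr_sym)
    finally show ?thesis unfolding \<rho>_def by simp
  qed
  have nonneg: "port_var M X K w \<ge> 0" for K w by (rule port_var_nonneg[OF P meas sq])
  have key: "\<exists>u\<in>feas. port_var M X Jstar u \<le> port_var M X J w" if w: "w \<in> feas" for w
  proof -
    define T where "T = (\<Sum>G\<in>C. w G * s (J G) / s (Jstar G))"
    have "(\<Sum>G\<in>C. w G) \<le> T" unfolding T_def
    proof (rule sum_mono)
      fix G assume G: "G \<in> C"
      have "1 \<le> s (J G) / s (Jstar G)" using sle[OF G] spos by simp
      then have "w G * 1 \<le> w G * (s (J G) / s (Jstar G))"
        using w G unfolding feas_def by (intro mult_left_mono) auto
      then show "w G \<le> w G * s (J G) / s (Jstar G)" by simp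
    qed
    then have T1: "1 \<le> T" using w unfolding feas_def by simp
    define u where "u G = w G * s (J G) / (s (Jstar G) * T)" for G
    have "u \<in> feas"
    proof -
      have "\<forall>G\<in>C. u G \<ge> 0"
      proof
        fix G assume G: "G \<in> C"
        have "0 \<le> w G" using w G unfolding feas_def by auto
        moreover have "0 < s (Jstar G) * T" using spos T1 by simp
        moreover have "0 \<le> s (J G)" using spos[of "J G"] by simp
        ultimately show "u G \<ge> 0" unfolding u_def by simp
      qed
      moreover have "(\<Sum>G\<in>C. u G) = (\<Sum>G\<in>C. w G * s (J G) / s (Jstar G)) / T"
        unfolding u_def sum_divide_distrib by (simp add: divide_divide_eq_left)
      then have "(\<Sum>G\<in>C. u G) = T / T" unfolding T_def .
      ultimately show ?thesis using T1 unfolding feas_def by simp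
    qed
    moreover have "port_var M X Jstar u = port_var M X J w / T\<^sup>2"
    proof -
      have "port_var M X Jstar u = (\<Sum>G\<in>C. \<Sum>H\<in>C. (w G * s (J G) / T) * (w H * s (J H) / T) * \<rho> G H)"
        unfolding port_var_def C_def[symmetric]
      proof (intro sum.cong refl)
        fix G H assume G: "G \<in> C" and H: "H \<in> C"
        have "covar M (X (Jstar G)) (X (Jstar H)) = \<rho> G H * (s (Jstar G) * s (Jstar H))"
          using covar_corr[of M X "Jstar G" "Jstar H", OF pos pos] rho[OF G H] unfolding s_def by simp
        then show "u G * u H * covar M (X (Jstar G)) (X (Jstar H)) =
           (w G * s (J G) / T) * (w H * s (J H) / T) * \<rho> G H"
          unfolding u_def using spos[of "Jstar G"] spos[of "Jstar H"] by (simp add: field_simps)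
      qed
      also have "\<dots> = (\<Sum>G\<in>C. \<Sum>H\<in>C. w G * w H * covar M (X (J G)) (X (J H)) / T\<^sup>2)"
      proof (intro sum.cong refl)
        fix G H
        have "covar M (X (J G)) (X (J H)) = \<rho> G H * (s (J G) * s (J H))"
          using covar_corr[of M X "J G" "J H", OF pos pos] unfolding s_def \<rho>_def by simp
        then show "(w G * s (J G) / T) * (w H * s (J H) / T) * \<rho> G H =
           w G * w H * covar M (X (J G)) (X (J H)) / T\<^sup>2"
          using T1 by (simp add: field_simps power2_eq_square)
      qed
      also have "\<dots> = port_var M X J w / T\<^sup>2"
        unfolding port_var_def C_def[symmetric] by (simp add: sum_divide_distrib)
      finally show ?thesis .
    qed
    moreover have "port_var M X J w / T\<^sup>2 \<le> port_var M X J w"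
    proof -
      have "1 \<le> T\<^sup>2" using T1 by (simp add: one_le_power)
      then show ?thesis using nonneg[of J w]
        by (simp add: divide_le_eq mult_le_cancel_left1 mult.commute)
    qed
    ultimately show ?thesis by (intro bexI[of _ u]) auto
  qed
  have fne: "feas \<noteq> {}"
  proof -
    obtain G0 where "G0 \<in> C" using Cne by auto
    then have "(\<lambda>G. if G = G0 then 1 else 0) \<in> feas"
      unfolding feas_def using finC by (simp add: sum.delta)
    then show ?thesis by auto
  qed
  have bdd: "bdd_below ((\<lambda>w. port_var M X Jstar w) ` feas)"
    using nonneg by (auto intro: bdd_belowI[where m=0])
  show ?thesis unfolding vm
  proof (rule cInf_greatest)
    show "(\<lambda>w. port_var M X J w) ` feas \<noteq> {}" using fne by simp
    fix x assume "x \<in> (\<lambda>w. port_var M X J w) ` feas"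
    then obtain w where w: "w \<in> feas" and x: "x = port_var M X J w" by auto
    obtain u where u: "u \<in> feas" and le: "port_var M X Jstar u \<le> port_var M X J w"
      using key[OF w] by auto
    show "Inf ((\<lambda>w. port_var M X Jstar w) ` feas) \<le> x"
      using cInf_lower[OF imageI[OF u] bdd] le x by simp
  qed
qed

end
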